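(* Let $n$ be a positive integer. For every irrational real $\xi$, $\lambda_n(\xi) = \max_{g \mid n} \lambda(g\xi)$, and for all reals $\xi \neq \xi'$, $\mu_n(\xi,\xi') = \max_{g\mid n} \mu(g\xi, g\xi')$, where $g$ ranges over the positive divisors of $n$.
   Context: For an irrational real $\xi$ and positive integer $n$, $\lambda_n(\xi) = \limsup_{s/t \to \xi} \dfrac{\gcd(t,n)}{t^2 \left| \frac{s}{t} - \xi\right|} \in \mathbb{R}\cup\{\infty\}$, the limsup being over rationals $s/t$ ($t>0$) tending to $\xi$; and $\lambda = \lambda_1$ is the classical Lagrange approximability. For reals $\xi\ne\xi'$, $\mu_n(\xi,\xi') = \sup_{(s,t)\in\mathbb{Z}^2\setminus\{0\}} \dfrac{\gcd(t,n)\,|\xi-\xi'|}{|s-t\xi|\,|s-t\xi'|} \in \mathbb{R}\cup\{\infty\}$ (with $\gcd(0,n)=n$), and $\mu=\mu_1$ is the classical Markoff approximability. *)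

theory Defs
  imports "HOL-Analysis.Analysis"
begin

definition lagr_term :: "nat \<Rightarrow> real \<Rightarrow> int \<Rightarrow> int \<Rightarrow> ereal" where
  "lagr_term n \<xi> s t =
     ereal (real_of_int (gcd t (int n)) / ((real_of_int t)\<^sup>2 * \<bar>real_of_int s / real_of_int t - \<xi>\<bar>))"

text \<open>lambda_n(xi) = limsup over rationals s/t (t > 0) tending to xi, written out as
  the infimum over eps > 0 of the supremum over s/t within distance eps of xi.\<close>
definition lambda_n :: "nat \<Rightarrow> real \<Rightarrow> ereal" where
  "lambda_n n \<xi> =
     (INF \<epsilon>\<in>{0<..}. SUP (s, t)\<in>{(s::int, t::int). t > 0 \<and>
          \<bar>real_of_int s / real_of_int t - \<xi>\<bar> < \<epsilon>}. lagr_term n \<xi> s t)"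

definition lagrange_approx :: "real \<Rightarrow> ereal" where
  "lagrange_approx \<xi> = lambda_n 1 \<xi>"

definition markoff_term :: "nat \<Rightarrow> real \<Rightarrow> real \<Rightarrow> int \<Rightarrow> int \<Rightarrow> ereal" where
  "markoff_term n \<xi> \<xi>' s t =
     (let d = \<bar>real_of_int s - real_of_int t * \<xi>\<bar> * \<bar>real_of_int s - real_of_int t * \<xi>'\<bar>
      in if d = 0 then \<infinity>
         else ereal (real_of_int (gcd t (int n)) * \<bar>\<xi> - \<xi>'\<bar> / d))"

definition mu_n :: "nat \<Rightarrow> real \<Rightarrow> real \<Rightarrow> ereal" where
  "mu_n n \<xi> \<xi>' = (SUP (s, t)\<in>(UNIV :: (int \<times> int) set) - {(0, 0)}. markoff_term n \<xi> \<xi>' s t)"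

definition markoff_approx :: "real \<Rightarrow> real \<Rightarrow> ereal" where
  "markoff_approx \<xi> \<xi>' = mu_n 1 \<xi> \<xi>'"

end

theory Submission
  imports Defs
begin

definition S :: "nat \<Rightarrow> real \<Rightarrow> real \<Rightarrow> ereal" where
  "S n \<xi> \<epsilon> = (SUP (s, t)\<in>{(s::int, t::int). t > 0 \<and>
          \<bar>real_of_int s / real_of_int t - \<xi>\<bar> < \<epsilon>}. lagr_term n \<xi> s t)"

lemma lambda_S: "lambda_n n \<xi> = (INF \<epsilon>\<in>{0<..}. S n \<xi> \<epsilon>)"
  unfolding lambda_n_def S_def by simp

lemma key_real:
  assumes "g > 0" "t' \<noteq> 0"
  shows "(real_of_int (int g * t'))\<^sup>2 * \<bar>real_of_int s / real_of_int (int g * t') - \<xi>\<bar>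
       = real g * ((real_of_int t')\<^sup>2 * \<bar>real_of_int s / real_of_int t' - real g * \<xi>\<bar>)"
proof -
  have "real_of_int s / real_of_int (int g * t') - \<xi> = (real_of_int s / real_of_int t' - real g * \<xi>) / real g"
    using assms by (simp add: field_simps)
  hence "\<bar>real_of_int s / real_of_int (int g * t') - \<xi>\<bar> = \<bar>real_of_int s / real_of_int t' - real g * \<xi>\<bar> / real g"
    by simp
  thus ?thesis using assms by (simp add: power2_eq_square abs_mult field_simps)
qed

lemma lagr_gen:
  assumes "g > 0" "t' \<noteq> 0"
  shows "lagr_term n \<xi> s (int g * t') =
     ereal (real_of_int (gcd (int g * t') (int n)) / real g * (1 / ((real_of_int t')\<^sup>2 * \<bar>real_of_int s / real_of_int t' - real g * \<xi>\<bar>)))"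
    "lagr_term 1 (real g * \<xi>) s t' = ereal (1 / ((real_of_int t')\<^sup>2 * \<bar>real_of_int s / real_of_int t' - real g * \<xi>\<bar>))"
  unfolding lagr_term_def using key_real[OF assms] by simp_all

lemma lagr_eq:
  assumes "g > 0" "t' \<noteq> 0" "gcd (int g * t') (int n) = int g"
  shows "lagr_term n \<xi> s (int g * t') = lagr_term 1 (real g * \<xi>) s t'"
  unfolding lagr_gen[OF assms(1,2)] using assms by simp

lemma lagr_le:
  assumes "g > 0" "t' \<noteq> 0" "int g \<le> gcd (int g * t') (int n)"
  shows "lagr_term 1 (real g * \<xi>) s t' \<le> lagr_term n \<xi> s (int g * t')"
  unfolding lagr_gen[OF assms(1,2)]
proof -
  let ?D = "(real_of_int t')\<^sup>2 * \<bar>real_of_int s / real_of_int t' - real g * \<xi>\<bar>"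
  have "1 \<le> real_of_int (gcd (int g * t') (int n)) / real g"
    using assms by (simp add: field_simps)
  moreover have "0 \<le> 1 / ?D" by simp
  ultimately have "1 * (1 / ?D) \<le> real_of_int (gcd (int g * t') (int n)) / real g * (1 / ?D)"
    by (rule mult_right_mono)
  thus "ereal (1 / ?D) \<le> ereal (real_of_int (gcd (int g * t') (int n)) / real g * (1 / ?D))" by simp
qed

lemma abs_g: "\<bar>real g * \<xi> - real g * \<xi>'\<bar> = real g * \<bar>\<xi> - \<xi>'\<bar>"
  by (metis abs_mult abs_of_nat right_diff_distrib)

lemma mark_gen1:
  assumes "g > 0"
  shows "markoff_term n \<xi> \<xi>' s (int g * t') =
     (let d = \<bar>real_of_int s - real_of_int t' * (real g * \<xi>)\<bar> * \<bar>real_of_int s - real_of_int t' * (real g * \<xi>')\<bar>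
      in if d = 0 then \<infinity>
         else ereal (real_of_int (gcd (int g * t') (int n)) / real g * \<bar>real g * \<xi> - real g * \<xi>'\<bar> / d))"
    unfolding markoff_term_def Let_def abs_g using assms by (simp add: mult.commute mult.left_commute)

lemma mark_gen2:
  shows "markoff_term 1 (real g * \<xi>) (real g * \<xi>') s t' =
     (let d = \<bar>real_of_int s - real_of_int t' * (real g * \<xi>)\<bar> * \<bar>real_of_int s - real_of_int t' * (real g * \<xi>')\<bar>
      in if d = 0 then \<infinity>
         else ereal (\<bar>real g * \<xi> - real g * \<xi>'\<bar> / d))"
    unfolding markoff_term_def Let_def by simp

lemmas mark_gen = mark_gen1 mark_gen2

lemma mark_eq:
  assumes "g > 0" "gcd (int g * t') (int n) = int g"
  shows "markoff_term n \<xi> \<xi>' s (int g * t') = markoff_term 1 (real g * \<xi>) (real g * \<xi>') s t'"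
  unfolding mark_gen1[OF assms(1)] mark_gen2 using assms by (simp add: Let_def)

lemma mark_le:
  assumes "g > 0" "int g \<le> gcd (int g * t') (int n)"
  shows "markoff_term 1 (real g * \<xi>) (real g * \<xi>') s t' \<le> markoff_term n \<xi> \<xi>' s (int g * t')"
proof -
  let ?d = "\<bar>real_of_int s - real_of_int t' * (real g * \<xi>)\<bar> * \<bar>real_of_int s - real_of_int t' * (real g * \<xi>')\<bar>"
  let ?N = "\<bar>real g * \<xi> - real g * \<xi>'\<bar> / ?d"
  have "1 \<le> real_of_int (gcd (int g * t') (int n)) / real g"
    using assms by (simp add: field_simps)
  moreover have "0 \<le> ?N" by simp
  ultimately have "1 * ?N \<le> real_of_int (gcd (int g * t') (int n)) / real g * ?N"
    by (rule mult_right_mono)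
  thus ?thesis unfolding mark_gen1[OF assms(1)] mark_gen2 Let_def by (simp add: mult.assoc)
qed


lemma gcd_split:
  assumes "t \<noteq> 0 \<or> n > 0"
  obtains g t' where "g > 0" "g dvd n" "t = int g * t'" "gcd (int g * t') (int n) = int g"
    "t > 0 \<Longrightarrow> t' > 0" "t = 0 \<longleftrightarrow> t' = 0"
proof -
  define g where "g = nat (gcd t (int n))"
  have gpos: "g > 0" using assms unfolding g_def by auto
  have gi: "int g = gcd t (int n)" unfolding g_def by simp
  have "int g dvd int n" unfolding gi by simp
  hence gd: "g dvd n" by simp
  define t' where "t' = t div int g"
  have tt: "t = int g * t'" unfolding t'_def gi by simp
  have "t > 0 \<Longrightarrow> t' > 0" using tt gpos by (simp add: zero_less_mult_iff)
  moreover have "t = 0 \<longleftrightarrow> t' = 0" using tt gpos by simp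
  ultimately show ?thesis using that[OF gpos gd tt] tt gi by metis
qed

lemma S_mono: "e1 \<le> e2 \<Longrightarrow> S m x e1 \<le> S m x e2"
  unfolding S_def by (rule SUP_subset_mono) auto

lemma S_upper:
  assumes "g > 0" "g dvd n" "\<delta> > 0"
  shows "S 1 (real g * \<xi>) (real g * \<delta>) \<le> S n \<xi> \<delta>"
  unfolding S_def
proof (rule SUP_least, clarify)
  fix s t' :: int
  assume a: "t' > 0" "\<bar>real_of_int s / real_of_int t' - real g * \<xi>\<bar> < real g * \<delta>"
  have ge: "int g \<le> gcd (int g * t') (int n)"
  proof (rule zdvd_imp_le)
    show "int g dvd gcd (int g * t') (int n)" using assms by simp
    show "0 < gcd (int g * t') (int n)" using assms a by simp
  qed
  have "\<bar>real_of_int s / real_of_int (int g * t') - \<xi>\<bar> * real g = \<bar>real_of_int s / real_of_int t' - real g * \<xi>\<bar>"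
  proof -
    have "(real_of_int s / real_of_int (int g * t') - \<xi>) * real g = real_of_int s / real_of_int t' - real g * \<xi>"
      using assms a by (simp add: field_simps)
    thus ?thesis by (metis abs_mult abs_of_nat)
  qed
  hence "\<bar>real_of_int s / real_of_int (int g * t') - \<xi>\<bar> < \<delta>" using a assms
    by (metis mult.commute mult_less_cancel_left_pos of_nat_0_less_iff)
  moreover have "int g * t' > 0" using a assms by simp
  ultimately have "(s, int g * t') \<in> {(s::int, t::int). t > 0 \<and>
          \<bar>real_of_int s / real_of_int t - \<xi>\<bar> < \<delta>}" by simp
  hence "lagr_term n \<xi> s (int g * t') \<le> (SUP (s, t)\<in>{(s::int, t::int). t > 0 \<and>
          \<bar>real_of_int s / real_of_int t - \<xi>\<bar> < \<delta>}. lagr_term n \<xi> s t)"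
    by (rule SUP_upper2) simp
  moreover have "lagr_term 1 (real g * \<xi>) s t' \<le> lagr_term n \<xi> s (int g * t')"
    using lagr_le[OF assms(1) _ ge] a by simp
  ultimately show "lagr_term 1 (real g * \<xi>) s t' \<le> (SUP (s, t)\<in>{(s::int, t::int). t > 0 \<and>
          \<bar>real_of_int s / real_of_int t - \<xi>\<bar> < \<delta>}. lagr_term n \<xi> s t)" by simp
qed

lemma S_least:
  assumes "n > 0" "\<delta> > 0" "\<And>g. g dvd n \<Longrightarrow> S 1 (real g * \<xi>) (real g * \<delta>) \<le> B"
  shows "S n \<xi> \<delta> \<le> B"
  unfolding S_def
proof (rule SUP_least, clarify)
  fix s t :: int
  assume a: "t > 0" "\<bar>real_of_int s / real_of_int t - \<xi>\<bar> < \<delta>"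
  obtain g t' where g: "g > 0" "g dvd n" "t = int g * t'" "gcd (int g * t') (int n) = int g"
    "t > 0 \<Longrightarrow> t' > 0"
  proof (rule gcd_split[of t n])
    show "t \<noteq> 0 \<or> n > 0" using a by simp
  qed blast
  have t'p: "t' > 0" using g a by simp
  have "\<bar>real_of_int s / real_of_int (int g * t') - \<xi>\<bar> * real g = \<bar>real_of_int s / real_of_int t' - real g * \<xi>\<bar>"
  proof -
    have "(real_of_int s / real_of_int (int g * t') - \<xi>) * real g = real_of_int s / real_of_int t' - real g * \<xi>"
      using g t'p by (simp add: field_simps)
    thus ?thesis by (metis abs_mult abs_of_nat)
  qed
  hence "\<bar>real_of_int s / real_of_int t' - real g * \<xi>\<bar> < real g * \<delta>" using a g
    by (metis mult.commute mult_less_cancel_left_pos of_nat_0_less_iff)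
  hence "(s, t') \<in> {(s::int, t::int). t > 0 \<and>
          \<bar>real_of_int s / real_of_int t - real g * \<xi>\<bar> < real g * \<delta>}" using t'p by simp
  hence "lagr_term 1 (real g * \<xi>) s t' \<le> S 1 (real g * \<xi>) (real g * \<delta>)"
    unfolding S_def by (rule SUP_upper2) simp
  also have "\<dots> \<le> B" using assms(3) g by simp
  finally show "lagr_term n \<xi> s t \<le> B" using lagr_eq[OF g(1) _ g(4)] t'p g(3) by simp
qed


lemma lambda_part:
  assumes n: "n > 0"
  shows "lambda_n n \<xi> = Max ((\<lambda>g. lagrange_approx (real g * \<xi>)) ` {g. g dvd n})"
proof -
  let ?D = "{g. g dvd n}"
  have fin: "finite ?D" using n by simp
  have ne: "?D \<noteq> {}" by auto
  have L: "lagrange_approx (real g * \<xi>) = (INF \<epsilon>\<in>{0<..}. S 1 (real g * \<xi>) \<epsilon>)" for g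
    unfolding lagrange_approx_def lambda_S ..
  have ge: "lagrange_approx (real g * \<xi>) \<le> lambda_n n \<xi>" if g: "g dvd n" for g
  proof -
    have gp: "g > 0" using g n by (metis dvd_0_left_iff gr0I less_irrefl)
    show ?thesis unfolding L lambda_S
    proof (rule INF_greatest)
      fix \<delta> :: real assume d: "\<delta> \<in> {0<..}"
      have "(INF \<epsilon>\<in>{0<..}. S 1 (real g * \<xi>) \<epsilon>) \<le> S 1 (real g * \<xi>) (real g * \<delta>)"
        by (rule INF_lower) (use d gp in simp)
      also have "\<dots> \<le> S n \<xi> \<delta>" using S_upper[OF gp g, of \<delta>] d by simp
      finally show "(INF \<epsilon>\<in>{0<..}. S 1 (real g * \<xi>) \<epsilon>) \<le> S n \<xi> \<delta>" .
    qed
  qed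
  have le: "lambda_n n \<xi> \<le> Max ((\<lambda>g. lagrange_approx (real g * \<xi>)) ` ?D)"
  proof (rule dense_ge)
    fix B assume B: "Max ((\<lambda>g. lagrange_approx (real g * \<xi>)) ` ?D) < B"
    have "\<forall>g\<in>?D. \<exists>e\<in>{0<..}. S 1 (real g * \<xi>) e < B"
    proof
      fix g assume g: "g \<in> ?D"
      have "lagrange_approx (real g * \<xi>) \<le> Max ((\<lambda>g. lagrange_approx (real g * \<xi>)) ` ?D)"
        using fin g by (intro Max_ge) auto
      with B have "(INF \<epsilon>\<in>{0<..}. S 1 (real g * \<xi>) \<epsilon>) < B" unfolding L by simp
      thus "\<exists>e\<in>{0<..}. S 1 (real g * \<xi>) e < B" by (simp add: INF_less_iff)
    qed
    then obtain f where f: "\<And>g. g \<in> ?D \<Longrightarrow> f g > 0 \<and> S 1 (real g * \<xi>) (f g) < B"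
      by (metis greaterThan_iff)
    define \<delta> where "\<delta> = Min (f ` ?D) / real n"
    have mp: "Min (f ` ?D) > 0" using fin ne f by (subst Min_gr_iff) auto
    hence dp: "\<delta> > 0" unfolding \<delta>_def using n by simp
    have "S n \<xi> \<delta> \<le> B"
    proof (rule S_least[OF n dp])
      fix g assume g: "g dvd n"
      have "g \<le> n" using g n by (simp add: dvd_imp_le)
      hence "real g * \<delta> \<le> real n * \<delta>" using dp by (simp add: mult_right_mono)
      also have "\<dots> = Min (f ` ?D)" unfolding \<delta>_def using n by simp
      also have "\<dots> \<le> f g" using fin g by simp
      finally have "S 1 (real g * \<xi>) (real g * \<delta>) \<le> S 1 (real g * \<xi>) (f g)" by (rule S_mono)
      also have "\<dots> \<le> B" using f[of g] g by (simp add: less_imp_le)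
      finally show "S 1 (real g * \<xi>) (real g * \<delta>) \<le> B" .
    qed
    thus "lambda_n n \<xi> \<le> B" unfolding lambda_S by (intro INF_lower2[of \<delta>]) (use dp in auto)
  qed
  have "Max ((\<lambda>g. lagrange_approx (real g * \<xi>)) ` ?D) \<le> lambda_n n \<xi>"
    using fin ne ge by (intro Max.boundedI) auto
  with le show ?thesis by simp
qed

lemma mu_part:
  assumes n: "n > 0"
  shows "mu_n n \<xi> \<xi>' = Max ((\<lambda>g. markoff_approx (real g * \<xi>) (real g * \<xi>')) ` {g. g dvd n})"
proof -
  let ?D = "{g. g dvd n}"
  let ?M = "Max ((\<lambda>g. markoff_approx (real g * \<xi>) (real g * \<xi>')) ` ?D)"
  have fin: "finite ?D" using n by simp
  have ne: "?D \<noteq> {}" by auto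
  have ge: "markoff_approx (real g * \<xi>) (real g * \<xi>') \<le> mu_n n \<xi> \<xi>'" if g: "g dvd n" for g
  proof -
    have gp: "g > 0" using g n by (metis dvd_0_left_iff gr0I less_irrefl)
    show ?thesis unfolding markoff_approx_def mu_n_def
    proof (rule SUP_least)
      fix p :: "int \<times> int" assume p: "p \<in> UNIV - {(0, 0)}"
      obtain s t' where pst: "p = (s, t')" by (cases p)
      have st: "(s, t') \<notin> {(0, 0)}" using p pst by simp
      have ge: "int g \<le> gcd (int g * t') (int n)"
      proof (rule zdvd_imp_le)
        show "int g dvd gcd (int g * t') (int n)" using g by simp
        show "0 < gcd (int g * t') (int n)" using n by simp
      qed
      have "(s, int g * t') \<in> (UNIV :: (int \<times> int) set) - {(0, 0)}" using st gp by auto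
      hence "markoff_term n \<xi> \<xi>' s (int g * t') \<le> (SUP (s, t)\<in>(UNIV :: (int \<times> int) set) - {(0, 0)}. markoff_term n \<xi> \<xi>' s t)"
        by (rule SUP_upper2) simp
      with mark_le[OF gp ge] have "markoff_term 1 (real g * \<xi>) (real g * \<xi>') s t'
          \<le> (SUP (s, t)\<in>(UNIV :: (int \<times> int) set) - {(0, 0)}. markoff_term n \<xi> \<xi>' s t)"
        by (rule order_trans)
      thus "(case p of (s, t) \<Rightarrow> markoff_term 1 (real g * \<xi>) (real g * \<xi>') s t)
          \<le> (SUP (s, t)\<in>(UNIV :: (int \<times> int) set) - {(0, 0)}. markoff_term n \<xi> \<xi>' s t)"
        using pst by simp
    qed
  qed
  have le: "mu_n n \<xi> \<xi>' \<le> ?M" unfolding mu_n_def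
  proof (rule SUP_least)
    fix p :: "int \<times> int" assume p: "p \<in> UNIV - {(0, 0)}"
    obtain s t where pst: "p = (s, t)" by (cases p)
    have st: "(s, t) \<notin> {(0, 0)}" using p pst by simp
    obtain g t' where g: "g > 0" "g dvd n" "t = int g * t'" "gcd (int g * t') (int n) = int g"
      "t = 0 \<longleftrightarrow> t' = 0"
    proof (rule gcd_split[of t n])
      show "t \<noteq> 0 \<or> n > 0" using n by simp
    qed blast
    have "(s, t') \<in> (UNIV :: (int \<times> int) set) - {(0, 0)}" using st g by auto
    hence "markoff_term 1 (real g * \<xi>) (real g * \<xi>') s t' \<le> markoff_approx (real g * \<xi>) (real g * \<xi>')"
      unfolding markoff_approx_def mu_n_def by (rule SUP_upper2) simp
    also have "\<dots> \<le> ?M" using fin g by (intro Max_ge) auto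
    finally have "markoff_term n \<xi> \<xi>' s t \<le> ?M" using mark_eq[OF g(1) g(4)] g(3) by simp
    thus "(case p of (s, t) \<Rightarrow> markoff_term n \<xi> \<xi>' s t) \<le> ?M" using pst by simp
  qed
  have "?M \<le> mu_n n \<xi> \<xi>'"
    using fin ne ge by (intro Max.boundedI) auto
  with le show ?thesis by simp
qed

theorem proposition3p1:
  fixes n :: nat
  assumes "n > 0"
  shows "(\<forall>\<xi>::real. \<xi> \<notin> \<rat> \<longrightarrow>
            lambda_n n \<xi> = Max ((\<lambda>g. lagrange_approx (real g * \<xi>)) ` {g. g dvd n}))
       \<and> (\<forall>\<xi> \<xi>' :: real. \<xi> \<noteq> \<xi>' \<longrightarrow>
            mu_n n \<xi> \<xi>' = Max ((\<lambda>g. markoff_approx (real g * \<xi>) (real g * \<xi>')) ` {g. g dvd n}))"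
  using lambda_part[OF assms] mu_part[OF assms] by blast

end
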